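(* Let $\lambda>1$ and $\Lambda>1$, and set $s=1/(\lambda-1)$. For $\nu>0$ and $\Lambda'\in\{1,\Lambda\}$ let $\xi_{\Lambda'}(\nu)$ be the unique positive real root of $\xi^{3}+(1+s)\nu\xi^{2}-\Lambda'\xi-s\nu\Lambda'=0$, and define $$\tilde{\varepsilon}(\nu)=\frac{\frac{\nu}{\lambda-1}\left(\frac{\Lambda}{\xi_1(\nu)\xi_\Lambda(\nu)}+\lambda\right)+\xi_1(\nu)+\xi_\Lambda(\nu)}{\frac{\nu}{\lambda-1}\left(\Lambda+\frac{\Lambda}{\xi_1(\nu)\xi_\Lambda(\nu)}+\lambda-1\right)+\Lambda\xi_1(\nu)+\xi_\Lambda(\nu)}.$$ Then $$\tilde{\varepsilon}(\nu)=\frac{1}{\sqrt{\Lambda}}+\frac{\sqrt{\Lambda}-1}{2\Lambda}\,\nu+O(\nu^{2})\quad(\nu\to0),$$ and $$\tilde{\varepsilon}(\nu)=\frac{\lambda}{\sqrt{\Lambda}+\lambda-1}-\frac{(\lambda-1)^{2}(\sqrt{\Lambda}-1)(\sqrt{\Lambda}+2)}{2\nu\sqrt{\lambda}\,(\sqrt{\Lambda}+\lambda-1)^{2}}+O\!\left(\frac{1}{\nu^{2}}\right)\quad(\nu\to\infty).$$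
   Context: $\tilde{\varepsilon}(\nu)=\varepsilon/\varepsilon_c$ is the normalized applied strain as a function of the dimensionless crack velocity $\nu$ in a minimal viscoelastic (Zener-element) crack model, where $\lambda=E_\infty/E_0$ is the ratio of glassy to rubbery moduli and $\Lambda=L/l$ is the ratio of sheet height to lattice spacing. For $s,\nu,\Lambda'>0$ the cubic defining $\xi_{\Lambda'}$ has exactly one positive real root. *)

theory Defs
  imports "HOL-Analysis.Analysis" "HOL-Library.Landau_Symbols"
begin

definition xi_cubic :: "real \<Rightarrow> real \<Rightarrow> real \<Rightarrow> real \<Rightarrow> real" where
  "xi_cubic lam Lam' nu x =
     (let s = 1 / (lam - 1) in x ^ 3 + (1 + s) * nu * x ^ 2 - Lam' * x - s * nu * Lam')"

definition xi :: "real \<Rightarrow> real \<Rightarrow> real \<Rightarrow> real" where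
  "xi lam Lam' nu = (THE x. x > 0 \<and> xi_cubic lam Lam' nu x = 0)"

definition eps_tilde :: "real \<Rightarrow> real \<Rightarrow> real \<Rightarrow> real" where
  "eps_tilde lam Lam nu =
     (let x1 = xi lam 1 nu; xL = xi lam Lam nu in
      (nu / (lam - 1) * (Lam / (x1 * xL) + lam) + x1 + xL) /
      (nu / (lam - 1) * (Lam + Lam / (x1 * xL) + lam - 1) + Lam * x1 + xL))"

end

theory Submission
  imports Defs
begin


lemma cub_s: "s = 1/(lam-1) \<Longrightarrow> xi_cubic lam L nu x = x^3 + (1 + s)*nu*x^2 - L*x - s*nu*L"
  by (simp add: xi_cubic_def Let_def)

lemma g_mono:
  fixes a b L m :: real
  assumes "0 < a" "a < b" "L > 0" "m > 0"
  shows "a - L/a - m/a^2 < b - L/b - m/b^2"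
proof -
  have "L/b < L/a" using assms by (simp add: divide_strict_left_mono)
  moreover have "a^2 < b^2" using assms by (simp add: power_strict_mono)
  then have "m/b^2 < m/a^2" using assms by (simp add: divide_strict_left_mono)
  ultimately show ?thesis using assms by linarith
qed

lemma cubic_div:
  fixes s L nu a :: real
  assumes "a > 0" "a^3 + (1 + s)*nu*a^2 - L*a - s*nu*L = 0"
  shows "a - L/a - (s*nu*L)/a^2 + (1 + s)*nu = 0"
proof -
  have "a - L/a - (s*nu*L)/a^2 + (1 + s)*nu = (a^3 + (1 + s)*nu*a^2 - L*a - s*nu*L) / a^2"
    using assms(1) by (simp add: field_simps power2_eq_square power3_eq_cube)
  with assms show ?thesis by simp
qed

lemma cubic_unique:
  fixes lam L nu a b :: real
  assumes "lam > 1" "L > 0" "nu > 0" "a > 0" "b > 0"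
    "xi_cubic lam L nu a = 0" "xi_cubic lam L nu b = 0"
  shows "a = b"
proof -
  define s where "s = 1/(lam-1)"
  have s: "s > 0" using assms by (simp add: s_def)
  have m: "s*nu*L > 0" using assms s by simp
  note A = cubic_div[OF assms(4), of s nu L] and B = cubic_div[OF assms(5), of s nu L]
  note A = A[OF assms(6)[unfolded cub_s[OF s_def]]] and B = B[OF assms(7)[unfolded cub_s[OF s_def]]]
  show ?thesis
  proof (rule linorder_cases[of a b])
    assume "a < b" from g_mono[OF assms(4) this assms(2) m] A B show ?thesis by linarith
  next
    assume "b < a" from g_mono[OF assms(5) this assms(2) m] A B show ?thesis by linarith
  qed
qed

lemma xi_char:
  assumes "lam > 1" "L > 0" "nu > 0" "x > 0" "xi_cubic lam L nu x = 0"
  shows "xi lam L nu = x"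
  unfolding xi_def
  by (rule the_equality) (use assms cubic_unique[OF assms(1-3)] in auto)

lemma h_ex:
  fixes lam t :: real
  assumes "lam > 1" "t > 0"
  shows "\<exists>r. 0 < r \<and> r < 1 \<and> xi_cubic lam 1 t r = 0"
proof -
  define s where "s = 1/(lam-1)"
  have s: "s > 0" using assms by (simp add: s_def)
  have c: "continuous_on {0..1} (xi_cubic lam 1 t)"
    unfolding xi_cubic_def Let_def by (intro continuous_intros)
  have f0: "xi_cubic lam 1 t 0 < 0" using assms s unfolding cub_s[OF s_def] by simp
  have f1: "xi_cubic lam 1 t 1 > 0" using assms s unfolding cub_s[OF s_def] by (simp add: algebra_simps)
  obtain r where r: "0 \<le> r" "r \<le> 1" "xi_cubic lam 1 t r = 0"
    using IVT'[of "xi_cubic lam 1 t" 0 0 1, OF _ _ _ c] f0 f1 by auto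
  have "r \<noteq> 0" "r \<noteq> 1" using r f0 f1 by auto
  with r have "0 < r" "r < 1" by auto
  with r show ?thesis by blast
qed

lemma xi_scale:
  assumes "lam > 1" "Lam > 0" "nu > 0"
  shows "xi lam Lam nu = sqrt Lam * xi lam 1 (nu / sqrt Lam)"
proof -
  define sg where "sg = sqrt Lam"
  define s where "s = 1/(lam-1)"
  have sg: "sg > 0" "sg^2 = Lam" using assms by (auto simp: sg_def)
  have p: "nu / sg > 0" using sg assms by simp
  obtain r where r: "0 < r" "r < 1" "xi_cubic lam 1 (nu/sg) r = 0" using h_ex[OF assms(1) p] by blast
  have e: "xi lam 1 (nu/sg) = r" using xi_char[OF assms(1) _ p r(1) r(3)] by simp
  have "xi_cubic lam (sg^2) nu (sg*r) = sg^3 * xi_cubic lam 1 (nu/sg) r"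
    unfolding cub_s[OF s_def] using sg(1) by (simp add: field_simps power2_eq_square power3_eq_cube)
  then have "xi_cubic lam Lam nu (sg*r) = sg^3 * xi_cubic lam 1 (nu/sg) r" using sg(2) by simp
  then have "xi_cubic lam Lam nu (sg*r) = 0" using r by simp
  then have "xi lam Lam nu = sg * r" using xi_char[OF assms(1-3)] sg r by simp
  then show ?thesis using e sg_def by simp
qed

lemma h_props:
  assumes "lam > 1" "t > 0"
  shows "0 < xi lam 1 t \<and> (xi lam 1 t)^2 * (xi lam 1 t + (1 + 1/(lam-1))*t) = xi lam 1 t + 1/(lam-1)*t"
proof -
  define s where "s = 1/(lam-1)"
  obtain r where r: "0 < r" "r < 1" "xi_cubic lam 1 t r = 0" using h_ex[OF assms] by blast
  have e: "xi lam 1 t = r" using xi_char[OF assms(1) _ assms(2) r(1) r(3)] by simp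
  have "r^2 * (r + (1 + s)*t) - (r + s*t) = xi_cubic lam 1 t r"
    unfolding cub_s[OF s_def] by (simp add: field_simps power2_eq_square power3_eq_cube)
  with r e show ?thesis unfolding s_def by simp
qed



lemma r_basic:
  fixes r s t :: real
  assumes s: "s > 0" and t: "t > 0" and r: "r > 0" and rel: "r^2*(r+(1+s)*t) = r + s*t"
  shows "r < 1" "s \<le> (1+s)*r^2"
proof -
  have W: "r + (1+s)*t > 0" using s t r by (simp add: add_pos_pos)
  show "r < 1"
  proof (rule ccontr)
    assume "\<not> r < 1"
    then have "r^2 \<ge> 1" by (simp add: one_le_power)
    then have "r^2*(r+(1+s)*t) \<ge> 1*(r+(1+s)*t)" using W by (intro mult_right_mono) auto
    with rel t show False by (simp add: algebra_simps)
  qed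
  have "s*(r+(1+s)*t) \<le> (1+s)*(r+s*t)" using s r t by (simp add: algebra_simps)
  also have "\<dots> = ((1+s)*r^2)*(r+(1+s)*t)" using rel by simp
  finally show "s \<le> (1+s)*r^2" using W by (simp add: mult_le_cancel_right_pos)
qed

lemma r_small:
  fixes r s t :: real
  assumes s: "s > 0" and t: "t > 0" and r: "r > 0" and rel: "r^2*(r+(1+s)*t) = r + s*t"
  shows "\<bar>r - (1 + (-1/2)*t)\<bar> \<le> ((3/(s/(1+s)) + 2*(1+s))/(2*(s/(1+s)))) * t^2"
proof -
  define m where "m = s/(1+s)"
  have m: "m > 0" using s by (simp add: m_def)
  note b = r_basic[OF s t r rel]
  have rm: "r^2 \<ge> m" using b s by (simp add: m_def field_simps)
  define D where "D = (r+1)*(r+(1+s)*t)"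
  have eq1: "(r-1)*D = -t" using rel unfolding D_def by (simp add: algebra_simps power2_eq_square power3_eq_cube)
  have "D \<ge> 1*(r+(1+s)*t)" unfolding D_def using r s t by (intro mult_right_mono) auto
  moreover have "(1+s)*t \<ge> 0" using s t by simp
  ultimately have "D \<ge> r" by simp
  moreover have "r \<ge> r^2" using b r by (simp add: power2_eq_square mult_left_le)
  ultimately have Dm: "D \<ge> m" using rm by linarith
  have Dp: "D > 0" using Dm m by linarith
  have omr: "1 - r = t / D" using eq1 Dp by (simp add: field_simps)
  have omr2: "1 - r \<le> t / m" unfolding omr using Dm m t by (simp add: frac_le)
  have eq2: "2*D*(r - (1 + (-1/2)*t)) = t*(D - 2)" using eq1 by (simp add: algebra_simps)
  have eq3: "D - 2 = (r-1)*(r+2) + (1+s)*t*(r+1)" unfolding D_def by (simp add: algebra_simps)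
  have x1: "-((r-1)*(r+2)) = (1-r)*(r+2)" by (simp add: algebra_simps)
  have x2: "(1-r)*(r+2) \<ge> 0" using b r by simp
  have x3: "(1+s)*t*(r+1) \<ge> 0" using s t r by simp
  have "\<bar>D - 2\<bar> \<le> (1-r)*(r+2) + (1+s)*t*(r+1)"
    unfolding eq3 using x1 x2 x3 by (simp only: abs_le_iff) linarith
  also have "\<dots> \<le> (t/m)*3 + (1+s)*t*2"
    using b r s t omr2 by (intro add_mono mult_mono) auto
  finally have D2: "\<bar>D - 2\<bar> \<le> (3/m + 2*(1+s))*t" by (simp add: algebra_simps)
  have "r - (1 + (-1/2)*t) = t*(D-2)/(2*D)" using eq2 Dp by (simp add: field_simps)
  then have "\<bar>r - (1 + (-1/2)*t)\<bar> = t*\<bar>D-2\<bar>/(2*D)"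
    using Dp t by (simp add: abs_mult)
  also have "\<dots> \<le> t*((3/m + 2*(1+s))*t)/(2*m)"
    using D2 Dm m t by (intro frac_le mult_left_mono) auto
  also have "\<dots> = ((3/m + 2*(1+s))/(2*m)) * t^2" by (simp add: power2_eq_square)
  finally show ?thesis unfolding m_def .
qed

lemma solve_eq: fixes P X Q :: real shows "P*X = Q \<Longrightarrow> P \<noteq> 0 \<Longrightarrow> X = Q/P"
  by (simp add: field_simps)

lemma r_large:
  fixes r s t c :: real
  assumes s: "s > 0" and t: "t > 0" and r: "r > 0" and rel: "r^2*(r+(1+s)*t) = r + s*t"
    and c: "c > 0" "c^2 = s/(1+s)"
  shows "\<bar>r - (c + (1/(2*(1+s)^2))*(1/t))\<bar> \<le> (1/(c*(1+s)^3)) * (1/t)^2"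
proof -
  note b = r_basic[OF s t r rel]
  have "s*(s*t) \<ge> 0" "s*(t*2) \<ge> 0" using s t by simp_all
  then have nz: "t + (s * (s * t) + s * (t * 2)) \<noteq> 0" using t by linarith
  define E where "E = (1+s)*(r+(1+s)*t)"
  have c2: "(1+s)*c^2 = s" using c s by (simp add: field_simps)
  have eqE: "E*(r^2 - c^2) = r"
  proof -
    have "E*(r^2 - c^2) = (1+s)*(r^2*(r+(1+s)*t)) - ((1+s)*c^2)*(r+(1+s)*t)"
      unfolding E_def by (simp add: algebra_simps)
    also have "\<dots> = r" unfolding rel c2 by (simp add: algebra_simps)
    finally show ?thesis .
  qed
  have Ege: "E \<ge> (1+s)^2*t" unfolding E_def using r s by (simp add: power2_eq_square algebra_simps)
  have Ep: "E > 0" using Ege s t by (smt (verit) mult_pos_pos zero_less_power)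
  have "r^2 - c^2 > 0" using eqE Ep r by (metis mult_pos_pos zero_less_mult_pos)
  then have rc: "c < r" using c r by (smt (verit) power_mono)
  have "(E*(r+c))*(r-c) = r" using eqE by (simp add: algebra_simps power2_eq_square)
  moreover have "E*(r+c) > 0" using Ep c r by simp
  ultimately have eqrc: "(r - c) = r/(E*(r+c))" by (simp add: field_simps)
  have q1: "r/(r+c) \<le> 1" using c r by simp
  have "r/(E*(r+c)) = (1/E)*(r/(r+c))" by simp
  also have "\<dots> \<le> (1/E)*1" using q1 Ep by (intro mult_left_mono) auto
  finally have "r/(E*(r+c)) \<le> 1/E" by simp
  also have "\<dots> \<le> 1/((1+s)^2*t)" using Ege s t Ep by (intro divide_left_mono) auto
  finally have rc2: "r - c \<le> 1/((1+s)^2*t)" using eqrc by simp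
  define d where "d = 1/(2*(1+s)^2)"
  define N where "N = (1+s)*t*(r-c) - r*(r+c)"
  have eqN: "2*(1+s)^2*t*(r+c)*E*(r - (c + d*(1/t))) = (1+s)*N"
  proof -
    have "2*(1+s)^2*t*(r+c)*E*(r - (c + d*(1/t))) = 2*(1+s)^2*t*(E*(r^2-c^2)) - (2*(1+s)^2*d)*(r+c)*E"
      using t by (simp add: algebra_simps power2_eq_square)
    also have "\<dots> = 2*(1+s)^2*t*r - (r+c)*E" unfolding eqE d_def using s by simp
    also have "\<dots> = (1+s)*N" unfolding N_def E_def by (simp add: algebra_simps power2_eq_square)
    finally show ?thesis .
  qed
  have N1: "(1+s)*t*(r-c) \<le> 1"
  proof -
    have "(1+s)*t*(r-c) \<le> (1+s)*t*(1/((1+s)^2*t))" using rc2 s t by (intro mult_left_mono) auto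
    also have "\<dots> = 1/(1+s)" using s t nz by (simp add: field_simps power2_eq_square)
    also have "\<dots> \<le> 1" using s by simp
    finally show ?thesis .
  qed
  have N0: "(1+s)*t*(r-c) \<ge> 0" using s t rc by simp
  have "r*(r+c) \<le> 1*2" using b rc c r by (intro mult_mono) auto
  then have N2: "r*(r+c) \<le> 2" by simp
  have N3: "r*(r+c) \<ge> 0" using r c by simp
  have absN: "\<bar>N\<bar> \<le> 2" unfolding N_def using N0 N1 N2 N3 by linarith
  have den: "2*(1+s)^2*t*(r+c)*E \<ge> 2*(1+s)^2*t*c*((1+s)^2*t)"
    using rc c s t Ege by (intro mult_mono) auto
  have denp: "2*(1+s)^2*t*c*((1+s)^2*t) > 0" using s t c by simp

  have dp: "2*(1+s)^2*t*(r+c)*E > 0" using den denp by linarith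
  have "r - (c + d*(1/t)) = (1+s)*N / (2*(1+s)^2*t*(r+c)*E)"
    using solve_eq[OF eqN] dp by (metis less_irrefl)
  then have "\<bar>r - (c + d*(1/t))\<bar> = (1+s)*\<bar>N\<bar> / (2*(1+s)^2*t*(r+c)*E)"
    using dp s t rc c Ep by (simp add: abs_mult)
  also have "\<dots> \<le> (1+s)*2 / (2*(1+s)^2*t*c*((1+s)^2*t))"
    using absN den denp s by (intro frac_le mult_left_mono) auto
  also have "(1+s)*2 / (2*(1+s)^2*t*c*((1+s)^2*t)) = ((1+s)*2) / (((1+s)*2)*(c*(1+s)^3*t^2))"
    by (simp add: algebra_simps power2_eq_square power3_eq_cube)
  also have "\<dots> = 1/(c*(1+s)^3*t^2)" using s by simp
  also have "\<dots> = (1/(c*(1+s)^3)) * (1/t)^2" by (simp add: power_one_over)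
  finally show ?thesis unfolding d_def .
qed



definition exp1 :: "(real \<Rightarrow> real) \<Rightarrow> real \<Rightarrow> real \<Rightarrow> bool" where
  "exp1 f a b \<longleftrightarrow> (\<lambda>u. f u - (a + b*u)) \<in> O[at_right 0](\<lambda>u. u^2)"

lemma ev_small: "eventually (\<lambda>u::real. 0 < u \<and> u < 1) (at_right 0)"
  unfolding eventually_at_right_field by (intro exI[of _ 1]) auto

lemma id_O1: "(\<lambda>u::real. u) \<in> O[at_right 0](\<lambda>_. 1)"
proof (rule bigoI[of _ 1])
  show "\<forall>\<^sub>F x in at_right 0. norm (x::real) \<le> 1 * norm (1::real)"
    using ev_small by eventually_elim auto
qed

lemma sq_O1: "(\<lambda>u::real. u^2) \<in> O[at_right 0](\<lambda>_. 1)"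
proof (rule bigoI[of _ 1])
  show "\<forall>\<^sub>F x in at_right 0. norm ((x::real)^2) \<le> 1 * norm (1::real)"
    using ev_small by eventually_elim (auto simp: abs_square_le_1 power2_eq_square mult_le_one)
qed

lemma lin_O1: "(\<lambda>u::real. a + b*u) \<in> O[at_right 0](\<lambda>_. 1)"
  by (intro sum_in_bigo(1)) (auto simp: id_O1)

lemma csq_O: "(\<lambda>u::real. k*u^2) \<in> O[at_right 0](\<lambda>u. u^2)"
  by (rule bigoI[of _ "\<bar>k\<bar>"]) (auto simp: abs_mult)

lemma exp1_O1: "exp1 f a b \<Longrightarrow> f \<in> O[at_right 0](\<lambda>_. 1)"
proof -
  assume "exp1 f a b"
  then have "(\<lambda>u. f u - (a + b*u)) \<in> O[at_right 0](\<lambda>_. 1)"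
    unfolding exp1_def using sq_O1 by (rule landau_o.big_trans)
  then have "(\<lambda>u. (f u - (a + b*u)) + (a + b*u)) \<in> O[at_right 0](\<lambda>_. 1)"
    by (intro sum_in_bigo(1) lin_O1)
  then show ?thesis by simp
qed

lemma exp1_const: "exp1 (\<lambda>u. c) c 0"
  unfolding exp1_def by simp

lemma exp1_id: "exp1 (\<lambda>u. u) 0 1"
  unfolding exp1_def by simp

lemma exp1_add: "exp1 f a b \<Longrightarrow> exp1 g c d \<Longrightarrow> exp1 (\<lambda>u. f u + g u) (a + c) (b + d)"
proof -
  assume A: "exp1 f a b" and B: "exp1 g c d"
  have "(\<lambda>u. (f u - (a + b*u)) + (g u - (c + d*u))) \<in> O[at_right 0](\<lambda>u. u^2)"
    using A B unfolding exp1_def by (intro sum_in_bigo(1))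
  then show ?thesis unfolding exp1_def by (simp add: algebra_simps)
qed

lemma exp1_mult: "exp1 f a b \<Longrightarrow> exp1 g c d \<Longrightarrow> exp1 (\<lambda>u. f u * g u) (a * c) (a*d + b*c)"
proof -
  assume A: "exp1 f a b" and B: "exp1 g c d"
  have g1: "g \<in> O[at_right 0](\<lambda>_. 1)" using B by (rule exp1_O1)
  have t1: "(\<lambda>u. (f u - (a + b*u)) * g u) \<in> O[at_right 0](\<lambda>u. u^2)"
    using A g1 unfolding exp1_def by (rule landau_o.big_1_mult)
  have t2: "(\<lambda>u. (g u - (c + d*u)) * (a + b*u)) \<in> O[at_right 0](\<lambda>u. u^2)"
    using B lin_O1 unfolding exp1_def by (rule landau_o.big_1_mult)
  have "(\<lambda>u. ((f u - (a + b*u)) * g u + (g u - (c + d*u)) * (a + b*u)) + (b*d)*u^2) \<in> O[at_right 0](\<lambda>u. u^2)"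
    by (intro sum_in_bigo(1) t1 t2 csq_O)
  then show ?thesis unfolding exp1_def by (simp add: algebra_simps power2_eq_square)
qed

lemma exp1_eq: "exp1 f a b \<Longrightarrow> a = a' \<Longrightarrow> b = b' \<Longrightarrow> exp1 f a' b'"
  by simp

lemma exp1_cong: "exp1 f a b \<Longrightarrow> (\<And>u. 0 < u \<Longrightarrow> f u = g u) \<Longrightarrow> exp1 g a b"
proof -
  assume A: "exp1 f a b" and e: "\<And>u. 0 < u \<Longrightarrow> f u = g u"
  have ev: "eventually (\<lambda>u. f u - (a + b*u) = g u - (a + b*u)) (at_right (0::real))"
    using ev_small by eventually_elim (simp add: e)
  show ?thesis using A unfolding exp1_def
    by (rule iffD1[OF landau_o.big.in_cong[OF ev]])
qed

lemma exp1_zero: "exp1 f 0 0 \<Longrightarrow> f \<in> O[at_right 0](\<lambda>u. u^2)"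
  unfolding exp1_def by simp

lemma exp1_away:
  assumes "exp1 g c d" "c \<noteq> 0"
  shows "eventually (\<lambda>u. \<bar>g u\<bar> \<ge> \<bar>c\<bar>/2) (at_right 0)"
proof -
  obtain K where K: "K > 0" "eventually (\<lambda>u. norm (g u - (c + d*u)) \<le> K * norm (u^2)) (at_right 0)"
    using assms(1) unfolding exp1_def by (elim landau_o.bigE) auto
  define M where "M = K + \<bar>d\<bar> + 1"
  have Mp: "M > 0" using K by (simp add: M_def)
  define \<delta> where "\<delta> = min 1 (\<bar>c\<bar> / (2*M))"
  have dp: "\<delta> > 0" using assms Mp by (simp add: \<delta>_def)
  have ev: "eventually (\<lambda>u::real. 0 < u \<and> u < \<delta>) (at_right 0)"
    unfolding eventually_at_right_field using dp by (intro exI[of _ \<delta>]) auto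
  show ?thesis
    using K(2) ev
  proof eventually_elim
    case (elim u)
    have u1: "u < 1" "u \<le> \<bar>c\<bar> / (2*M)" using elim \<delta>_def by auto
    have "u*u \<le> u*1" using elim u1 by (intro mult_left_mono) auto
    then have uu: "u^2 \<le> u" by (simp add: power2_eq_square)
    have n: "norm (u^2) = u^2" by simp
    have "\<bar>g u - (c + d*u)\<bar> \<le> K*u^2" using elim(1) n by simp
    also have "\<dots> \<le> K*u" using uu K(1) by (intro mult_left_mono) auto
    finally have h1: "\<bar>g u - (c + d*u)\<bar> \<le> K*u" .
    have h2: "\<bar>d*u\<bar> \<le> \<bar>d\<bar>*u" using elim by (simp add: abs_mult)
    have "\<bar>g u - c\<bar> \<le> K*u + \<bar>d\<bar>*u" using h1 h2 by linarith
    also have "\<dots> \<le> M * u" using elim by (simp add: M_def algebra_simps)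
    also have "\<dots> \<le> M * (\<bar>c\<bar> / (2*M))"
      using u1 Mp by (intro mult_left_mono) auto
    also have "\<dots> = \<bar>c\<bar>/2" using Mp by simp
    finally show "\<bar>g u\<bar> \<ge> \<bar>c\<bar>/2" by linarith
  qed
qed

lemma exp1_inv_bounded:
  assumes "exp1 g c d" "c \<noteq> 0"
  shows "(\<lambda>u. 1 / g u) \<in> O[at_right 0](\<lambda>_. 1)"
proof -
  have "eventually (\<lambda>u. norm (1 / g u) \<le> (2/\<bar>c\<bar>) * norm (1::real)) (at_right 0)"
    using exp1_away[OF assms]
  proof eventually_elim
    case (elim u)
    then have gp: "\<bar>g u\<bar> > 0" using assms(2) by linarith
    have "1/\<bar>g u\<bar> \<le> 1/(\<bar>c\<bar>/2)" using elim assms(2) by (intro divide_left_mono) auto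
    then show ?case by (simp add: abs_divide)
  qed
  then show ?thesis by (rule bigoI)
qed

lemma div_aux: fixes f L g :: real shows "g \<noteq> 0 \<Longrightarrow> (f - L*g)*(1/g) = f/g - L"
  by (simp add: field_simps)

lemma exp1_div:
  assumes A: "exp1 f a b" and B: "exp1 g c d" and c: "c \<noteq> 0"
  shows "exp1 (\<lambda>u. f u / g u) (a / c) ((b*c - a*d) / c^2)"
proof -
  define e where "e = (b*c - a*d) / c^2"
  have L: "exp1 (\<lambda>u. a/c + e*u) (a/c) e"
    using exp1_add[OF exp1_const exp1_mult[OF exp1_const exp1_id], of "a/c" e] by simp
  have M: "exp1 (\<lambda>u. (a/c + e*u) * g u) ((a/c)*c) ((a/c)*d + e*c)"
    using exp1_mult[OF L B] by simp
  have N: "exp1 (\<lambda>u. f u + (-1) * ((a/c + e*u) * g u)) 0 0"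
    by (rule exp1_eq[OF exp1_add[OF A exp1_mult[OF exp1_const M, of "-1"]]])
      (use c in \<open>auto simp: e_def field_simps power2_eq_square\<close>)
  have N2: "(\<lambda>u. (f u - (a/c + e*u) * g u)) \<in> O[at_right 0](\<lambda>u. u^2)"
    using exp1_zero[OF N] by simp
  have bigA: "(\<lambda>u. (f u - (a/c + e*u) * g u) * (1 / g u)) \<in> O[at_right 0](\<lambda>u. u^2)"
    using N2 exp1_inv_bounded[OF B c] by (rule landau_o.big_1_mult)
  have ev2: "eventually (\<lambda>u. (f u - (a/c + e*u) * g u) * (1 / g u) = f u / g u - (a/c + e*u)) (at_right 0)"
  proof -
    have "eventually (\<lambda>u. g u \<noteq> 0) (at_right 0)"
      using exp1_away[OF B c] by eventually_elim (use c in auto)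
    then show ?thesis by eventually_elim (rule div_aux)
  qed
  have "exp1 (\<lambda>u. f u / g u) (a / c) e" unfolding exp1_def
    by (rule iffD1[OF landau_o.big.in_cong[OF ev2] bigA])
  then show ?thesis by (simp add: e_def)
qed



lemma exp1_diff: "exp1 f a b \<Longrightarrow> exp1 g c d \<Longrightarrow> exp1 (\<lambda>u. f u - g u) (a - c) (b - d)"
  using exp1_add[of f a b "\<lambda>u. -1 * g u" "-1*c" "-1*d"] exp1_mult[OF exp1_const[of "-1"], of g c d]
  by simp

lemma exp1_from_bound:
  assumes "\<And>u. 0 < u \<Longrightarrow> \<bar>f u - (a + b*u)\<bar> \<le> K*u^2"
  shows "exp1 f a b"
  unfolding exp1_def
proof (rule bigoI[of _ K])
  show "\<forall>\<^sub>F x in at_right 0. norm (f x - (a + b * x)) \<le> K * norm ((x::real)^2)"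
    using ev_small by eventually_elim (use assms in auto)
qed

lemma small_X:
  assumes "lam > 1"
  shows "\<exists>K. \<forall>u>0. \<bar>xi lam 1 u - (1 + (-1/2)*u)\<bar> \<le> K*u^2"
proof -
  define s where "s = 1/(lam-1)"
  have s: "s > 0" using assms by (simp add: s_def)
  show ?thesis
  proof (intro exI allI impI)
    fix u :: real assume u: "0 < u"
    note h = h_props[OF assms u, folded s_def]
    show "\<bar>xi lam 1 u - (1 + (-1/2)*u)\<bar> \<le> ((3/(s/(1+s)) + 2*(1+s))/(2*(s/(1+s))))*u^2"
      using r_small[OF s u conjunct1[OF h] conjunct2[OF h]] .
  qed
qed

lemma exp1_X_small: "lam > 1 \<Longrightarrow> exp1 (\<lambda>u. xi lam 1 u) 1 (-1/2)"
  using small_X[of lam] exp1_from_bound by blast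

lemma exp1_Y_small:
  assumes "lam > 1" "Lam > 0"
  shows "exp1 (\<lambda>u. xi lam Lam u) (sqrt Lam) (-1/2)"
proof -
  obtain K where K: "\<forall>u>0. \<bar>xi lam 1 u - (1 + (-1/2)*u)\<bar> \<le> K*u^2" using small_X[OF assms(1)] by blast
  define sg where "sg = sqrt Lam"
  have sg: "sg > 0" using assms by (simp add: sg_def)
  show ?thesis unfolding sg_def[symmetric]
  proof (rule exp1_from_bound[of _ _ _ "K/sg"])
    fix u :: real assume u: "0 < u"
    have e: "xi lam Lam u = sg * xi lam 1 (u/sg)" using xi_scale[OF assms u] sg_def by simp
    have k: "\<bar>xi lam 1 (u/sg) - (1 + (-1/2)*(u/sg))\<bar> \<le> K*(u/sg)^2"
      using K[rule_format, OF divide_pos_pos[OF u sg]] .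
    have "xi lam Lam u - (sg + (-1/2)*u) = sg * (xi lam 1 (u/sg) - (1 + (-1/2)*(u/sg)))"
      unfolding e using sg by (simp add: field_simps)
    then have "\<bar>xi lam Lam u - (sg + (-1/2)*u)\<bar> = sg * \<bar>xi lam 1 (u/sg) - (1 + (-1/2)*(u/sg))\<bar>"
      using sg by (simp add: abs_mult)
    also have "\<dots> \<le> sg * (K*(u/sg)^2)" using k sg by (intro mult_left_mono) auto
    also have "\<dots> = K/sg*u^2" using sg by (simp add: field_simps power2_eq_square)
    finally show "\<bar>xi lam Lam u - (sg + (-1/2)*u)\<bar> \<le> K/sg*u^2" .
  qed
qed



lemma small_main:
  fixes lam Lam :: real
  assumes lam: "lam > 1" and Lam: "Lam > 1"
  shows "exp1 (eps_tilde lam Lam) (1 / sqrt Lam) ((sqrt Lam - 1) / (2 * Lam))"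
proof -
  define w where "w = sqrt Lam"
  define q where "q = lam - 1"
  have w: "w > 1" "Lam = w^2" using Lam by (auto simp: w_def)
  have q: "q > 0" "lam = q + 1" using lam by (auto simp: q_def)
  note eX = exp1_X_small[OF lam]
  note eY = exp1_Y_small[OF lam, of Lam, folded w_def] 
  have eXY: "exp1 (\<lambda>u. xi lam 1 u * xi lam Lam u) w (-(1+w)/2)"
    by (rule exp1_eq[OF exp1_mult[OF eX eY[OF _]]]) (use Lam in \<open>auto simp: field_simps\<close>)
  have eI: "exp1 (\<lambda>u. Lam / (xi lam 1 u * xi lam Lam u)) w ((1+w)/2)"
    by (rule exp1_eq[OF exp1_div[OF exp1_const eXY]]) (use w in \<open>auto simp: field_simps power2_eq_square add_pos_pos\<close>)
  have eU: "exp1 (\<lambda>u. u / (lam - 1)) 0 (1/q)"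
    by (rule exp1_eq[OF exp1_div[OF exp1_id exp1_const[of "lam - 1"]]]) (use q in \<open>auto simp: field_simps power2_eq_square\<close>)
  have eN: "exp1 (\<lambda>u. u / (lam - 1) * (Lam / (xi lam 1 u * xi lam Lam u) + lam) + xi lam 1 u + xi lam Lam u)
             (1 + w) ((w + lam)/q - 1)"
    by (rule exp1_eq[OF exp1_add[OF exp1_add[OF exp1_mult[OF eU exp1_add[OF eI exp1_const]] eX] eY[OF _]]])
      (use q Lam in \<open>auto simp: field_simps\<close>)
  have eD: "exp1 (\<lambda>u. u / (lam - 1) * (Lam + Lam / (xi lam 1 u * xi lam Lam u) + lam - 1) + Lam * xi lam 1 u + xi lam Lam u)
             (Lam + w) ((Lam + w + lam - 1)/q - (Lam + 1)/2)"
    by (rule exp1_eq[OF exp1_add[OF exp1_add[OF exp1_mult[OF eU exp1_diff[OF exp1_add[OF exp1_add[OF exp1_const eI] exp1_const] exp1_const]] exp1_mult[OF exp1_const eX]] eY[OF _]]])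
      (use q Lam in \<open>auto simp: field_simps\<close>)
  have wp: "w * w > 0" using w(1) by simp
  have pos: "w + w * w \<noteq> 0" "w * w + w \<noteq> 0" "w^2 + w \<noteq> 0" using wp w(1) unfolding power2_eq_square by linarith+
  have nz: "Lam + w \<noteq> 0" using w(1) Lam by linarith
  have e: "exp1 (\<lambda>u. (u / (lam - 1) * (Lam / (xi lam 1 u * xi lam Lam u) + lam) + xi lam 1 u + xi lam Lam u) /
     (u / (lam - 1) * (Lam + Lam / (xi lam 1 u * xi lam Lam u) + lam - 1) + Lam * xi lam 1 u + xi lam Lam u))
     (1 / sqrt Lam) ((sqrt Lam - 1) / (2 * Lam))"
  proof (rule exp1_eq[OF exp1_div[OF eN eD nz]])
    show "(1 + w) / (Lam + w) = 1 / sqrt Lam"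
      unfolding w_def[symmetric] w(2) using w pos by (simp add: field_simps power2_eq_square)
    show "(((w + lam) / q - 1) * (Lam + w) - (1 + w) * ((Lam + w + lam - 1) / q - (Lam + 1) / 2)) / (Lam + w)\<^sup>2 =
    (sqrt Lam - 1) / (2 * Lam)"
    proof -
      have N: "((w + lam) / q - 1) * (Lam + w) - (1 + w) * ((Lam + w + lam - 1) / q - (Lam + 1) / 2)
             = (1+w)*((w-1)*(w+1))/2"
        unfolding w(2) q(2) using q by (simp add: field_simps power2_eq_square)
      have D: "(Lam + w)^2 = w^2*(1+w)^2" unfolding w(2) by (simp add: power2_eq_square algebra_simps)
      have nz1: "2*(w^2*(1+w)^2) \<noteq> 0" "2*w^2 \<noteq> 0" using w(1) by auto
      have "(1+w)*((w-1)*(w+1)) / (2*(w^2*(1+w)^2)) = (w-1)/(2*w^2)"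
        by (subst frac_eq_eq[OF nz1]) (simp add: power2_eq_square algebra_simps)
      then have "(1+w)*((w-1)*(w+1))/2 / (w^2*(1+w)^2) = (w-1)/(2*w^2)" by simp
      then show ?thesis unfolding N D unfolding w_def[symmetric] unfolding w(2) by simp
    qed
  qed
  show ?thesis
    by (rule exp1_cong[OF e]) (simp add: eps_tilde_def Let_def)
qed


lemma alg_large:
  fixes w q r P R :: real
  assumes "w > 0" "q > 0" "r > 0" "P = w + 1" "R = w + q"
  shows "((P/r*(1 - q*w/2)) * (P*R/q) - ((q+1)*P/q) * (w*P/r*(1 - q/2))) / (P*R/q)^2
        = -(q^2*(w-1)*(w+2))/(2*r*R^2)"
proof -
  have P: "P > 0" "R > 0" using assms by auto
  have "(P/r*(1 - q*w/2)) * (P*R/q) - ((q+1)*P/q) * (w*P/r*(1 - q/2)) = P^2/(r*q) * (R*(1 - q*w/2) - (q+1)*w*(1 - q/2))"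
    using assms by (simp add: field_simps power2_eq_square)
  also have "R*(1 - q*w/2) - (q+1)*w*(1 - q/2) = -(q*(w-1)*(w+2))/2"
    unfolding assms(5) by (simp add: field_simps)
  finally have N: "(P/r*(1 - q*w/2)) * (P*R/q) - ((q+1)*P/q) * (w*P/r*(1 - q/2)) = P^2/(r*q) * (-(q*(w-1)*(w+2))/2)" .
  show ?thesis unfolding N using P assms(2,3) by (simp add: field_simps power2_eq_square)
qed


lemma large_X:
  assumes lam: "lam > 1"
  shows "\<exists>K. \<forall>u>0. \<bar>xi lam 1 (1/u) - (1/sqrt lam + ((lam-1)^2/(2*lam^2))*u)\<bar> \<le> K*u^2"
proof -
  define s where "s = 1/(lam-1)"
  define q where "q = lam - 1"
  have q: "q > 0" "lam = q + 1" using lam by (auto simp: q_def)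
  have s: "s > 0" "s = 1/q" using lam by (auto simp: s_def q_def)
  define c where "c = 1/sqrt lam"
  have c: "c > 0" "c^2 = s/(1+s)"
  proof -
    show "c > 0" using lam by (simp add: c_def)
    have "c^2 = 1/lam" using lam by (simp add: c_def power_divide)
    also have "\<dots> = s/(1+s)" unfolding s(2) q(2) using q by (simp add: field_simps)
    finally show "c^2 = s/(1+s)" .
  qed
  have dd: "1/(2*(1+s)^2) = (lam-1)^2/(2*lam^2)"
    unfolding s(2) q(2) using q by (simp add: field_simps power2_eq_square)
  show ?thesis
  proof (intro exI allI impI)
    fix u :: real assume u: "0 < u"
    have t: "1/u > 0" using u by simp
    note h = h_props[OF lam t, folded s_def]
    have "\<bar>xi lam 1 (1/u) - (c + (1/(2*(1+s)^2))*(1/(1/u)))\<bar> \<le> (1/(c*(1+s)^3)) * (1/(1/u))^2"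
      using r_large[OF s(1) t conjunct1[OF h] conjunct2[OF h] c] .
    then show "\<bar>xi lam 1 (1/u) - (1/sqrt lam + ((lam-1)^2/(2*lam^2))*u)\<bar> \<le> (1/(c*(1+s)^3))*u^2"
      unfolding dd c_def by simp
  qed
qed

lemma exp1_X_large: "lam > 1 \<Longrightarrow> exp1 (\<lambda>u. xi lam 1 (1/u)) (1/sqrt lam) ((lam-1)^2/(2*lam^2))"
proof -
  assume "lam > 1"
  then obtain K where K: "\<forall>u>0. \<bar>xi lam 1 (1/u) - (1/sqrt lam + ((lam-1)^2/(2*lam^2))*u)\<bar> \<le> K*u^2"
    using large_X by blast
  show ?thesis by (rule exp1_from_bound[of _ _ _ K]) (use K in auto)
qed

lemma exp1_Y_large:
  assumes "lam > 1" "Lam > 0"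
  shows "exp1 (\<lambda>u. xi lam Lam (1/u)) (sqrt Lam * (1/sqrt lam)) ((sqrt Lam)^2 * ((lam-1)^2/(2*lam^2)))"
proof -
  define c where "c = 1/sqrt lam"
  define d where "d = (lam-1)^2/(2*lam^2)"
  obtain K where K: "\<forall>u>0. \<bar>xi lam 1 (1/u) - (c + d*u)\<bar> \<le> K*u^2"
    using large_X[OF assms(1)] unfolding c_def d_def by blast
  define w where "w = sqrt Lam"
  have w: "w > 0" using assms by (simp add: w_def)
  show ?thesis unfolding w_def[symmetric] c_def[symmetric] d_def[symmetric]
  proof (rule exp1_from_bound[of _ _ _ "w^3*K"])
    fix u :: real assume u: "0 < u"
    have e: "xi lam Lam (1/u) = w * xi lam 1 (1/(w*u))"
      using xi_scale[OF assms, of "1/u"] u w_def by (simp add: mult.commute)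
    have k: "\<bar>xi lam 1 (1/(w*u)) - (c + d*(w*u))\<bar> \<le> K*(w*u)^2"
      using K[rule_format, OF mult_pos_pos[OF w u]] .
    have "xi lam Lam (1/u) - (w*c + w^2*d*u) = w * (xi lam 1 (1/(w*u)) - (c + d*(w*u)))"
      unfolding e by (simp add: algebra_simps power2_eq_square)
    then have "\<bar>xi lam Lam (1/u) - (w*c + w^2*d*u)\<bar> = w * \<bar>xi lam 1 (1/(w*u)) - (c + d*(w*u))\<bar>"
      using w by (simp add: abs_mult)
    also have "\<dots> \<le> w * (K*(w*u)^2)" using k w by (intro mult_left_mono) auto
    also have "\<dots> = w^3*K*u^2" by (simp add: power2_eq_square power3_eq_cube)
    finally show "\<bar>xi lam Lam (1/u) - (w*c + w^2*d*u)\<bar> \<le> w^3*K*u^2" .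
  qed
qed

lemma div_u_aux:
  fixes u k A X Y C D :: real
  assumes "u > 0"
  shows "((1/u)/k*A + X + Y) / ((1/u)/k*C + D + Y) = (1/k*A + u*(X+Y)) / (1/k*C + u*(D+Y))"
proof -
  have n: "(1/u)/k*A + X + Y = (1/k*A + u*(X+Y))/u" using assms by (simp add: field_simps)
  have m: "(1/u)/k*C + D + Y = (1/k*C + u*(D+Y))/u" using assms by (simp add: field_simps)
  show ?thesis unfolding n m using assms by (simp add: divide_divide_eq_left)
qed



lemma cancel_aux: fixes a P q R :: real
  shows "P \<noteq> 0 \<Longrightarrow> q \<noteq> 0 \<Longrightarrow> R \<noteq> 0 \<Longrightarrow> a*P/q/(P*R/q) = a/R"
  by (simp add: field_simps)

lemma large_main:
  fixes lam Lam :: real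
  assumes lam: "lam > 1" and Lam: "Lam > 1"
  shows "exp1 (\<lambda>u. eps_tilde lam Lam (1/u)) (lam / (sqrt Lam + lam - 1))
           (-((lam-1)^2*(sqrt Lam - 1)*(sqrt Lam + 2))/(2* sqrt lam*(sqrt Lam + (lam - 1))^2))"
proof -
  define w where "w = sqrt Lam"
  define r where "r = sqrt lam"
  define q where "q = lam - 1"
  define c where "c = 1/r"
  define d where "d = q^2/(2*lam^2)"
  have w: "w > 1" "Lam = w^2" using Lam by (auto simp: w_def)
  have r: "r > 1" "lam = r^2" using lam by (auto simp: r_def)
  have q: "q > 0" "lam = q + 1" using lam by (auto simp: q_def)
  have lp: "lam > 0" using lam by simp
  note eX = exp1_X_large[OF lam, folded r_def q_def, folded c_def d_def]
  note eY = exp1_Y_large[OF lam, of Lam, folded r_def q_def w_def, folded c_def d_def]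
  have eXY: "exp1 (\<lambda>u. xi lam 1 (1/u) * xi lam Lam (1/u)) (w/lam) (c*d*w*(w+1))"
    by (rule exp1_eq[OF exp1_mult[OF eX eY[OF _]]])
      (use Lam r in \<open>auto simp: c_def power2_eq_square field_simps\<close>)
  have eI: "exp1 (\<lambda>u. Lam / (xi lam 1 (1/u) * xi lam Lam (1/u))) (w*lam) (-(q^2*w*(w+1))/(2*r))"
  proof (rule exp1_eq[OF exp1_div[OF exp1_const eXY]])
    show "w / lam \<noteq> 0" using w lp by simp
    show "Lam / (w / lam) = w * lam" unfolding w(2) using w lp by (simp add: field_simps power2_eq_square)
    show "(0 * (w / lam) - Lam * (c * d * w * (w + 1))) / (w / lam)\<^sup>2 = - (q\<^sup>2 * w * (w + 1)) / (2 * r)"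
      unfolding w(2) c_def d_def using w lp r by (simp add: field_simps power2_eq_square)
  qed
  have eN: "exp1 (\<lambda>u. 1/(lam-1) * (Lam / (xi lam 1 (1/u) * xi lam Lam (1/u)) + lam) + u * (xi lam 1 (1/u) + xi lam Lam (1/u)))
              (lam*(w+1)/q) ((w+1)/r*(1 - q*w/2))"
    by (rule exp1_eq[OF exp1_add[OF exp1_mult[OF exp1_const exp1_add[OF eI exp1_const]] exp1_mult[OF exp1_id exp1_add[OF eX eY[OF _]]]]])
      (use Lam q r in \<open>auto simp: c_def q_def[symmetric] field_simps power2_eq_square\<close>)
  have eD: "exp1 (\<lambda>u. 1/(lam-1) * (Lam + Lam / (xi lam 1 (1/u) * xi lam Lam (1/u)) + lam - 1) + u * (Lam * xi lam 1 (1/u) + xi lam Lam (1/u)))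
              ((w+1)*(w+q)/q) (w*(w+1)/r*(1 - q/2))"
    by (rule exp1_eq[OF exp1_add[OF exp1_mult[OF exp1_const exp1_diff[OF exp1_add[OF exp1_add[OF exp1_const eI] exp1_const] exp1_const]] exp1_mult[OF exp1_id exp1_add[OF exp1_mult[OF exp1_const eX] eY[OF _]]]]])
      (use Lam q w r in \<open>auto simp: c_def q_def[symmetric] field_simps power2_eq_square\<close>)
  have nz: "(w+1)*(w+q)/q \<noteq> 0" using w q by simp
  have e: "exp1 (\<lambda>u. (1/(lam-1) * (Lam / (xi lam 1 (1/u) * xi lam Lam (1/u)) + lam) + u * (xi lam 1 (1/u) + xi lam Lam (1/u))) /
      (1/(lam-1) * (Lam + Lam / (xi lam 1 (1/u) * xi lam Lam (1/u)) + lam - 1) + u * (Lam * xi lam 1 (1/u) + xi lam Lam (1/u))))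
      (lam / (sqrt Lam + lam - 1))
           (-((lam-1)^2*(sqrt Lam - 1)*(sqrt Lam + 2))/(2* sqrt lam*(sqrt Lam + (lam - 1))^2))"
  proof (rule exp1_eq[OF exp1_div[OF eN eD nz]])
    show "lam * (w + 1) / q / ((w + 1) * (w + q) / q) = lam / (sqrt Lam + lam - 1)"
    proof -
      have p: "w + 1 > 0" "w + q > 0" using w q by auto
      have e1: "lam * (w + 1) / q / ((w + 1) * (w + q) / q) = lam/(w+q)"
        using cancel_aux[of "w+1" q "w+q" lam] p q by simp
      have e2: "w + q = sqrt Lam + lam - 1" unfolding w_def q_def by simp
      show ?thesis unfolding e2[symmetric] by (rule e1)
    qed
    show "((w + 1) / r * (1 - q * w / 2) * ((w + 1) * (w + q) / q) - lam * (w + 1) / q * (w * (w + 1) / r * (1 - q / 2))) /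
    ((w + 1) * (w + q) / q)\<^sup>2 =
    - ((lam - 1)\<^sup>2 * (sqrt Lam - 1) * (sqrt Lam + 2)) / (2 * sqrt lam * (sqrt Lam + (lam - 1))\<^sup>2)"
      using alg_large[of w q r "w+1" "w+q"] w q r unfolding w_def[symmetric] r_def[symmetric] q_def[symmetric]
      by (simp add: q(2))
  qed
  show ?thesis
  proof (rule exp1_cong[OF e])
    fix u :: real assume u: "0 < u"
    show "(1/(lam-1) * (Lam / (xi lam 1 (1/u) * xi lam Lam (1/u)) + lam) + u * (xi lam 1 (1/u) + xi lam Lam (1/u))) /
      (1/(lam-1) * (Lam + Lam / (xi lam 1 (1/u) * xi lam Lam (1/u)) + lam - 1) + u * (Lam * xi lam 1 (1/u) + xi lam Lam (1/u)))
      = eps_tilde lam Lam (1/u)"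
      unfolding eps_tilde_def Let_def using div_u_aux[OF u] by simp
  qed
qed



theorem theorem2:
  fixes lam Lam :: real
  assumes "lam > 1" and "Lam > 1"
  shows "((\<lambda>nu. eps_tilde lam Lam nu - (1 / sqrt Lam + (sqrt Lam - 1) / (2 * Lam) * nu))
           \<in> O[at_right 0](\<lambda>nu. nu ^ 2)) \<and>
         ((\<lambda>nu. eps_tilde lam Lam nu - (lam / (sqrt Lam + lam - 1)
            - (lam - 1) ^ 2 * (sqrt Lam - 1) * (sqrt Lam + 2)
              / (2 * nu * sqrt lam * (sqrt Lam + lam - 1) ^ 2)))
           \<in> O[at_top](\<lambda>nu. 1 / nu ^ 2))"
proof
  show "(\<lambda>nu. eps_tilde lam Lam nu - (1 / sqrt Lam + (sqrt Lam - 1) / (2 * Lam) * nu))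
           \<in> O[at_right 0](\<lambda>nu. nu ^ 2)"
    using small_main[OF assms] unfolding exp1_def .
next
  define A where "A = lam / (sqrt Lam + lam - 1)"
  define B where "B = -((lam-1)^2 * (sqrt Lam - 1) * (sqrt Lam + 2)) / (2 * sqrt lam * (sqrt Lam + (lam - 1))^2)"
  have e: "exp1 (\<lambda>u. eps_tilde lam Lam (1/u)) A B"
    using large_main[OF assms] unfolding A_def B_def .
  obtain K where K: "eventually (\<lambda>u. norm (eps_tilde lam Lam (1/u) - (A + B*u)) \<le> K * norm (u^2)) (at_right 0)"
    using e unfolding exp1_def by (elim landau_o.bigE) auto
  have K2: "eventually (\<lambda>x. norm (eps_tilde lam Lam (1/inverse x) - (A + B*inverse x)) \<le> K * norm ((inverse x)^2)) at_top"
    using K unfolding eventually_at_right_to_top .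
  have sq: "sqrt Lam > 0" using assms by simp
  have sp: "sqrt Lam + lam - 1 > 0" "sqrt lam > 0" using sq assms by (linarith, simp)
  have "eventually (\<lambda>x. norm (eps_tilde lam Lam x - (lam / (sqrt Lam + lam - 1)
            - (lam - 1) ^ 2 * (sqrt Lam - 1) * (sqrt Lam + 2)
              / (2 * x * sqrt lam * (sqrt Lam + lam - 1) ^ 2))) \<le> K * norm (1 / x^2)) at_top"
    using K2 eventually_gt_at_top[of 0]
  proof eventually_elim
    case (elim x)
    have t: "A + B * inverse x = lam / (sqrt Lam + lam - 1)
            - (lam - 1) ^ 2 * (sqrt Lam - 1) * (sqrt Lam + 2)
              / (2 * x * sqrt lam * (sqrt Lam + lam - 1) ^ 2)"
      unfolding A_def B_def using elim(2) sp by (simp add: field_simps)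
    have i1: "1 / inverse x = x" by (simp add: divide_inverse)
    have i2: "(inverse x)^2 = 1 / x^2" by (simp add: inverse_eq_divide power_one_over)
    show ?case using elim(1) unfolding t i1 i2 .
  qed
  then show "(\<lambda>nu. eps_tilde lam Lam nu - (lam / (sqrt Lam + lam - 1)
            - (lam - 1) ^ 2 * (sqrt Lam - 1) * (sqrt Lam + 2)
              / (2 * nu * sqrt lam * (sqrt Lam + lam - 1) ^ 2)))
           \<in> O[at_top](\<lambda>nu. 1 / nu ^ 2)" by (rule bigoI)
qed

end
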